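(* For all $A\subseteq E$, $\Lambda(A,P)\le\bar\Lambda(A,P)\le(b+1)\cdot\Lambda(A,P)$, where $b=\max_i|E_2\cap p_i|$ is the maximum number of edges that a user path shares with other user paths.
   Context: $G=(V,E)$ is a simple directed acyclic graph with capacities $C\in\mathbb{R}_{\ge0}^E$ and $\gamma$ is a budget with $0<\gamma\le\min_eC(e)$. User paths $P=\{p_1,\dots,p_k\}$ are directed paths (edge sets, not necessarily disjoint) with initial values $\lambda_i\ge0$, $\sum_{i:e\in p_i}\lambda_i\le C(e)$ for all $e$. For $A\subseteq E$ let $\tilde C_A(e)=C(e)-\gamma\mathbf{1}_{\{e\in A\}}$; $T(A,P)$ is the optimal value of: maximize $\sum_i\tilde\lambda_i$ s.t. $\sum_{i:e\in p_i}\tilde\lambda_i\le\tilde C_A(e)$ for all $e$, $0\le\tilde\lambda_i\le\lambda_i$; $\Lambda(A,P)=\sum_i\lambda_i-T(A,P)$. Let $E_1$ be the set of edges lying on exactly one user path and $E_2$ those lying on at least two. Define $\tilde\lambda^{(1)}_{iA}=\min\big(\lambda_i,\min_{e\in p_i\cap E_1}\tilde C_A(e)\big)$, $\tilde\lambda^{(2)}_{iA}=\tilde\lambda^{(1)}_{iA}\cdot\prod_{e\in p_i\cap E_2,\ \tilde C_A(e)\le\sum_{j:e\in p_j}\lambda_j}\frac{\tilde C_A(e)}{\sum_{j:e\in p_j}\lambda_j}$, and $\bar\Lambda(A,P)=\sum_i\lambda_i-\sum_i\tilde\lambda^{(2)}_{iA}$. *)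

theory Defs
  imports Main Complex_Main
begin

definition simple_dag :: "('v \<times> 'v) set \<Rightarrow> bool" where
  "simple_dag E \<longleftrightarrow> finite E \<and> (\<forall>v. (v, v) \<notin> E) \<and> acyclic E"

definition is_path_edges :: "('v \<times> 'v) set \<Rightarrow> ('v \<times> 'v) set \<Rightarrow> bool" where
  "is_path_edges E p \<longleftrightarrow> (\<exists>vs. vs \<noteq> [] \<and> distinct vs \<and>
      p = set (zip vs (tl vs)) \<and> p \<subseteq> E)"

definition Ctil :: "('e \<Rightarrow> real) \<Rightarrow> real \<Rightarrow> 'e set \<Rightarrow> 'e \<Rightarrow> real" where
  "Ctil C \<gamma> A e = C e - (if e \<in> A then \<gamma> else 0)"

definition load :: "nat \<Rightarrow> (nat \<Rightarrow> 'e set) \<Rightarrow> (nat \<Rightarrow> real) \<Rightarrow> 'e \<Rightarrow> real" where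
  "load k p lam e = (\<Sum>j | j < k \<and> e \<in> p j. lam j)"

definition Topt :: "'e set \<Rightarrow> ('e \<Rightarrow> real) \<Rightarrow> real \<Rightarrow> nat \<Rightarrow> (nat \<Rightarrow> 'e set)
    \<Rightarrow> (nat \<Rightarrow> real) \<Rightarrow> 'e set \<Rightarrow> real" where
  "Topt E C \<gamma> k p lam A = Sup {(\<Sum>i<k. x i) | x.
      (\<forall>e\<in>E. (\<Sum>i | i < k \<and> e \<in> p i. x i) \<le> Ctil C \<gamma> A e) \<and>
      (\<forall>i<k. 0 \<le> x i \<and> x i \<le> lam i)}"

definition Lam :: "'e set \<Rightarrow> ('e \<Rightarrow> real) \<Rightarrow> real \<Rightarrow> nat \<Rightarrow> (nat \<Rightarrow> 'e set)
    \<Rightarrow> (nat \<Rightarrow> real) \<Rightarrow> 'e set \<Rightarrow> real" where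
  "Lam E C \<gamma> k p lam A = (\<Sum>i<k. lam i) - Topt E C \<gamma> k p lam A"

definition E1 :: "'e set \<Rightarrow> nat \<Rightarrow> (nat \<Rightarrow> 'e set) \<Rightarrow> 'e set" where
  "E1 E k p = {e \<in> E. card {i. i < k \<and> e \<in> p i} = 1}"

definition E2 :: "'e set \<Rightarrow> nat \<Rightarrow> (nat \<Rightarrow> 'e set) \<Rightarrow> 'e set" where
  "E2 E k p = {e \<in> E. card {i. i < k \<and> e \<in> p i} \<ge> 2}"

text \<open>lambda-tilde^(1): the inner minimum over an empty set is read as +infinity.\<close>
definition lam1 :: "'e set \<Rightarrow> ('e \<Rightarrow> real) \<Rightarrow> real \<Rightarrow> nat \<Rightarrow> (nat \<Rightarrow> 'e set)
    \<Rightarrow> (nat \<Rightarrow> real) \<Rightarrow> 'e set \<Rightarrow> nat \<Rightarrow> real" where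
  "lam1 E C \<gamma> k p lam A i =
     (if p i \<inter> E1 E k p = {} then lam i
      else min (lam i) (Min (Ctil C \<gamma> A ` (p i \<inter> E1 E k p))))"

definition lam2 :: "'e set \<Rightarrow> ('e \<Rightarrow> real) \<Rightarrow> real \<Rightarrow> nat \<Rightarrow> (nat \<Rightarrow> 'e set)
    \<Rightarrow> (nat \<Rightarrow> real) \<Rightarrow> 'e set \<Rightarrow> nat \<Rightarrow> real" where
  "lam2 E C \<gamma> k p lam A i = lam1 E C \<gamma> k p lam A i *
     (\<Prod>e \<in> {e \<in> p i \<inter> E2 E k p. Ctil C \<gamma> A e \<le> load k p lam e}.
        Ctil C \<gamma> A e / load k p lam e)"

definition Lambar :: "'e set \<Rightarrow> ('e \<Rightarrow> real) \<Rightarrow> real \<Rightarrow> nat \<Rightarrow> (nat \<Rightarrow> 'e set)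
    \<Rightarrow> (nat \<Rightarrow> real) \<Rightarrow> 'e set \<Rightarrow> real" where
  "Lambar E C \<gamma> k p lam A = (\<Sum>i<k. lam i) - (\<Sum>i<k. lam2 E C \<gamma> k p lam A i)"

text \<open>b = max_i |E_2 \<inter> p_i| (taken to be 0 when there are no user paths).\<close>
definition bmax :: "'e set \<Rightarrow> nat \<Rightarrow> (nat \<Rightarrow> 'e set) \<Rightarrow> nat" where
  "bmax E k p = Max (insert 0 ((\<lambda>i. card (E2 E k p \<inter> p i)) ` {..<k}))"

end

theory Submission
  imports Defs
begin

lemma one_minus_prod_le:
  fixes f :: "'a \<Rightarrow> real"
  assumes "finite S" "\<forall>e\<in>S. 0 \<le> f e \<and> f e \<le> 1"
  shows "1 - prod f S \<le> (\<Sum>e\<in>S. 1 - f e)"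
  using assms
proof (induction S rule: finite_induct)
  case empty then show ?case by simp
next
  case (insert a S)
  have P: "0 \<le> prod f S" "prod f S \<le> 1" using insert by (auto intro: prod_nonneg prod_le_1)
  have fa: "0 \<le> f a" "f a \<le> 1" using insert by auto
  have "1 - prod f (insert a S) = (1 - f a) + f a * (1 - prod f S)"
    using insert by (simp add: algebra_simps)
  also have "\<dots> \<le> (1 - f a) + (1 - prod f S)"
    using P fa mult_left_le_one_le[of "1 - prod f S" "f a"] by simp
  also have "\<dots> \<le> (1 - f a) + (\<Sum>e\<in>S. 1 - f e)" using insert by simp
  finally show ?case using insert by simp
qed

theorem lemma3:
  fixes E :: "('v \<times> 'v) set" and C :: "('v \<times> 'v) \<Rightarrow> real" and \<gamma> :: real
    and k :: nat and p :: "nat \<Rightarrow> ('v \<times> 'v) set" and lam :: "nat \<Rightarrow> real"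
    and A :: "('v \<times> 'v) set"
  assumes G: "simple_dag E"
    and Cnn: "\<forall>e\<in>E. 0 \<le> C e"
    and gpos: "0 < \<gamma>" and gle: "\<forall>e\<in>E. \<gamma> \<le> C e"
    and paths: "\<forall>i<k. is_path_edges E (p i)"
    and lamnn: "\<forall>i<k. 0 \<le> lam i"
    and lamcap: "\<forall>e\<in>E. load k p lam e \<le> C e"
    and AE: "A \<subseteq> E"
  shows "Lam E C \<gamma> k p lam A \<le> Lambar E C \<gamma> k p lam A \<and>
         Lambar E C \<gamma> k p lam A \<le> real (bmax E k p + 1) * Lam E C \<gamma> k p lam A"
proof -
  define Ct where "Ct = Ctil C \<gamma> A"
  define L where "L = load k p lam"
  define I where "I e = {j. j < k \<and> e \<in> p j}" for e
  define l1 where "l1 = lam1 E C \<gamma> k p lam A"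
  define l2 where "l2 = lam2 E C \<gamma> k p lam A"
  define F where "F = {e \<in> E2 E k p. Ct e \<le> L e}"
  define fac where "fac e = Ct e / L e" for e
  define b where "b = bmax E k p"
  have finE: "finite E" using G by (simp add: simple_dag_def)
  have pE: "\<And>i. i < k \<Longrightarrow> p i \<subseteq> E" using paths by (auto simp: is_path_edges_def)
  have finp: "\<And>i. i<k \<Longrightarrow> finite (p i)" using pE finE finite_subset by blast
  have finI: "\<And>e. finite (I e)" unfolding I_def by (rule finite_subset[of _ "{..<k}"]) auto
  have FE: "F \<subseteq> E" unfolding F_def E2_def by auto
  have finF: "finite F" using FE finE finite_subset by blast
  have Ctnn: "\<And>e. e \<in> E \<Longrightarrow> 0 \<le> Ct e" using Cnn gle unfolding Ct_def Ctil_def by force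
  have Lsum: "\<And>e. L e = sum lam (I e)" unfolding L_def load_def I_def by simp
  have Lnn: "\<And>e. 0 \<le> L e" unfolding Lsum I_def using lamnn by (auto intro: sum_nonneg)
  have l1_le: "\<And>i. l1 i \<le> lam i" unfolding l1_def lam1_def by auto
  have l1_nn: "0 \<le> l1 i" if i: "i<k" for i
  proof (cases "p i \<inter> E1 E k p = {}")
    case True then show ?thesis using lamnn i unfolding l1_def lam1_def by simp
  next
    case False
    have fin: "finite (p i \<inter> E1 E k p)" using finp[OF i] by simp
    have "0 \<le> Min (Ct ` (p i \<inter> E1 E k p))"
      using fin False Ctnn pE[OF i] by (subst Min_ge_iff) auto
    then show ?thesis using False lamnn i unfolding l1_def lam1_def Ct_def by simp
  qed
  have l2eq: "l2 i = l1 i * prod fac (p i \<inter> F)" for i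
  proof -
    have setEq: "{e \<in> p i \<inter> E2 E k p. Ctil C \<gamma> A e \<le> load k p lam e} = p i \<inter> F"
      unfolding F_def Ct_def L_def by auto
    show ?thesis unfolding l2_def lam2_def setEq by (simp add: l1_def fac_def Ct_def L_def)
  qed
  have fac01: "0 \<le> fac e \<and> fac e \<le> 1" if "e \<in> F" for e
  proof -
    have "e \<in> E" using that FE by blast
    then have "0 \<le> Ct e" "Ct e \<le> L e" using that Ctnn unfolding F_def by auto
    then show ?thesis unfolding fac_def using Lnn[of e]
      by (cases "L e = 0") (auto simp: divide_le_eq_1)
  qed
  have prod01: "0 \<le> prod fac S \<and> prod fac S \<le> 1" if "S \<subseteq> F" for S
  proof -
    have h: "\<And>e. e \<in> S \<Longrightarrow> 0 \<le> fac e \<and> fac e \<le> 1" using fac01 that by blast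
    show ?thesis by (intro conjI prod_nonneg prod_le_1) (use h in blast)+
  qed
  have l2_nn: "0 \<le> l2 i" if "i < k" for i
    using l1_nn[OF that] prod01[of "p i \<inter> F"] unfolding l2eq by simp
  have l2_le1: "l2 i \<le> l1 i" if "i < k" for i
    using l1_nn[OF that] prod01[of "p i \<inter> F"] mult_left_le[of "prod fac (p i \<inter> F)" "l1 i"]
    unfolding l2eq by simp
  have feas: "sum l2 (I e) \<le> Ct e" if eE: "e \<in> E" for e
  proof (cases "card (I e) = 0")
    case True
    then have "I e = {}" using finI by simp
    then show ?thesis using Ctnn[OF eE] by simp
  next
    case c0: False
    show ?thesis
    proof (cases "card (I e) = 1")
      case True
      then obtain i where Ii: "I e = {i}" by (metis card_1_singletonE)
      then have i: "i < k" "e \<in> p i" unfolding I_def by auto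
      have eE1: "e \<in> E1 E k p" using eE True unfolding E1_def I_def by simp
      have ne: "p i \<inter> E1 E k p \<noteq> {}" using i eE1 by auto
      have fin: "finite (p i \<inter> E1 E k p)" using finp[OF i(1)] by simp
      have "l1 i \<le> Min (Ct ` (p i \<inter> E1 E k p))"
        using ne unfolding l1_def lam1_def Ct_def by simp
      also have "\<dots> \<le> Ct e" using fin i eE1 by (intro Min_le) auto
      finally show ?thesis using Ii l2_le1[OF i(1)] by simp
    next
      case False
      then have "2 \<le> card (I e)" using c0 by linarith
      then have eE2: "e \<in> E2 E k p" using eE unfolding E2_def I_def by simp
      show ?thesis
      proof (cases "Ct e \<le> L e")
        case True
        then have eF: "e \<in> F" unfolding F_def using eE2 by simp
        have "l2 i \<le> lam i * fac e" if iI: "i \<in> I e" for i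
        proof -
          have i: "i < k" "e \<in> p i" using iI unfolding I_def by auto
          have "prod fac (p i \<inter> F) = fac e * prod fac (p i \<inter> F - {e})"
            using i eF finp[OF i(1)] by (subst prod.remove[of _ e]) auto
          then have "l2 i = (l1 i * prod fac (p i \<inter> F - {e})) * fac e" unfolding l2eq by simp
          also have "\<dots> \<le> l1 i * fac e"
            using prod01[of "p i \<inter> F - {e}"] l1_nn[OF i(1)] fac01[OF eF]
            by (intro mult_right_mono mult_left_le) auto
          also have "\<dots> \<le> lam i * fac e" using l1_le fac01[OF eF] by (intro mult_right_mono) auto
          finally show ?thesis .
        qed
        then have "sum l2 (I e) \<le> (\<Sum>i\<in>I e. lam i * fac e)" by (rule sum_mono)
        also have "\<dots> = L e * fac e" by (simp add: Lsum sum_distrib_right)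
        also have "\<dots> \<le> Ct e" unfolding fac_def using Ctnn[OF eE]
          by (cases "L e = 0") auto
        finally show ?thesis .
      next
        case False
        have "sum l2 (I e) \<le> sum lam (I e)"
          using l2_le1 l1_le by (intro sum_mono) (auto simp: I_def intro: order_trans)
        then show ?thesis using False Lsum by simp
      qed
    qed
  qed
  have Seq: "\<And>x e. (\<Sum>i | i < k \<and> e \<in> p i. x i) = sum x (I e)" unfolding I_def by simp
  define S where "S = {(\<Sum>i<k. x i) | x.
      (\<forall>e\<in>E. (\<Sum>i | i < k \<and> e \<in> p i. x i) \<le> Ctil C \<gamma> A e) \<and>
      (\<forall>i<k. 0 \<le> x i \<and> x i \<le> lam i)}"
  have TS: "Topt E C \<gamma> k p lam A = Sup S" unfolding Topt_def S_def ..
  have bdd: "bdd_above S"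
    unfolding S_def by (rule bdd_aboveI[of _ "\<Sum>i<k. lam i"]) (auto intro: sum_mono)
  have l2S: "(\<Sum>i<k. l2 i) \<in> S"
  proof -
    have "\<forall>e\<in>E. (\<Sum>i | i < k \<and> e \<in> p i. l2 i) \<le> Ctil C \<gamma> A e"
      using feas Seq unfolding Ct_def by metis
    moreover have "\<forall>i<k. 0 \<le> l2 i \<and> l2 i \<le> lam i" using l2_nn l2_le1 l1_le by (meson order_trans)
    ultimately show ?thesis unfolding S_def by blast
  qed
  have part1: "(\<Sum>i<k. l2 i) \<le> Topt E C \<gamma> k p lam A"
    unfolding TS using l2S bdd by (rule cSup_upper)
  have key: "(\<Sum>i<k. lam i - l2 i) \<le> real (b+1) * (\<Sum>i<k. lam i - x i)"
    if xc: "\<forall>e\<in>E. (\<Sum>i | i < k \<and> e \<in> p i. x i) \<le> Ctil C \<gamma> A e"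
      and xb: "\<forall>i<k. 0 \<le> x i \<and> x i \<le> lam i" for x
  proof -
    have xcI: "sum x (I e) \<le> Ct e" if "e \<in> E" for e using xc that Seq unfolding Ct_def by metis
    have a: "x i \<le> l1 i" if i: "i < k" for i
    proof (cases "p i \<inter> E1 E k p = {}")
      case True then show ?thesis using xb i unfolding l1_def lam1_def by simp
    next
      case False
      have fin: "finite (p i \<inter> E1 E k p)" using finp[OF i] by simp
      have "x i \<le> Ct e" if e: "e \<in> p i \<inter> E1 E k p" for e
      proof -
        have "card (I e) = 1" "e \<in> E" using e unfolding E1_def I_def by auto
        then obtain j where "I e = {j}" by (metis card_1_singletonE)
        moreover have "i \<in> I e" using e i unfolding I_def by auto
        ultimately have "I e = {i}" by auto
        then show ?thesis using xcI[OF \<open>e \<in> E\<close>] by simp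
      qed
      then have "x i \<le> Min (Ct ` (p i \<inter> E1 E k p))"
        using fin False by (subst Min_ge_iff) auto
      then show ?thesis using False xb i unfolding l1_def lam1_def Ct_def by simp
    qed
    have bnd: "lam i - l2 i \<le> (lam i - x i) + (\<Sum>e\<in>p i \<inter> F. lam i * (1 - fac e))"
      if i: "i < k" for i
    proof -
      have "l1 i - l2 i = l1 i * (1 - prod fac (p i \<inter> F))" unfolding l2eq by (simp add: algebra_simps)
      also have "\<dots> \<le> l1 i * (\<Sum>e\<in>p i \<inter> F. 1 - fac e)"
        using one_minus_prod_le[of "p i \<inter> F" fac] finp[OF i] fac01 l1_nn[OF i]
        by (intro mult_left_mono) auto
      also have "\<dots> \<le> lam i * (\<Sum>e\<in>p i \<inter> F. 1 - fac e)"
        using l1_le fac01 by (intro mult_right_mono sum_nonneg) auto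
      also have "\<dots> = (\<Sum>e\<in>p i \<inter> F. lam i * (1 - fac e))" by (simp add: sum_distrib_left)
      finally show ?thesis using a[OF i] by simp
    qed
    have swap: "(\<Sum>i<k. \<Sum>e\<in>p i \<inter> F. g i e) = (\<Sum>e\<in>F. \<Sum>i\<in>I e. g i e)" for g :: "nat \<Rightarrow> _ \<Rightarrow> real"
    proof -
      have "(\<Sum>i<k. \<Sum>e\<in>p i \<inter> F. g i e) = (\<Sum>i\<in>{..<k}. \<Sum>e\<in>{e. e \<in> F \<and> e \<in> p i}. g i e)"
        by (intro sum.cong) auto
      also have "\<dots> = (\<Sum>e\<in>F. \<Sum>i\<in>{i. i \<in> {..<k} \<and> e \<in> p i}. g i e)"
        using finF by (intro sum.swap_restrict) auto
      also have "\<dots> = (\<Sum>e\<in>F. \<Sum>i\<in>I e. g i e)" unfolding I_def by (intro sum.cong) auto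
      finally show ?thesis .
    qed
    have "(\<Sum>i<k. lam i - l2 i) \<le> (\<Sum>i<k. (lam i - x i) + (\<Sum>e\<in>p i \<inter> F. lam i * (1 - fac e)))"
      using bnd by (intro sum_mono) auto
    also have "\<dots> = (\<Sum>i<k. lam i - x i) + (\<Sum>e\<in>F. \<Sum>i\<in>I e. lam i * (1 - fac e))"
      by (simp add: sum.distrib swap)
    also have "(\<Sum>e\<in>F. \<Sum>i\<in>I e. lam i * (1 - fac e)) = (\<Sum>e\<in>F. L e * (1 - fac e))"
      by (simp add: Lsum sum_distrib_right)
    also have "\<dots> \<le> (\<Sum>e\<in>F. \<Sum>i\<in>I e. lam i - x i)"
    proof (intro sum_mono)
      fix e assume eF: "e \<in> F"
      have eE: "e \<in> E" using eF FE by auto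
      have "L e * (1 - fac e) \<le> L e - Ct e"
        using Ctnn[OF eE] eF unfolding fac_def F_def
        by (cases "L e = 0") (auto simp: field_simps)
      also have "\<dots> \<le> (\<Sum>i\<in>I e. lam i - x i)"
        using xcI[OF eE] by (simp add: Lsum sum_subtractf)
      finally show "L e * (1 - fac e) \<le> (\<Sum>i\<in>I e. lam i - x i)" .
    qed
    also have "(\<Sum>e\<in>F. \<Sum>i\<in>I e. lam i - x i) = (\<Sum>i<k. \<Sum>e\<in>p i \<inter> F. lam i - x i)"
      by (rule swap[symmetric])
    also have "\<dots> = (\<Sum>i<k. (lam i - x i) * real (card (p i \<inter> F)))" by (simp add: mult.commute)
    also have "\<dots> \<le> (\<Sum>i<k. (lam i - x i) * real b)"
    proof (intro sum_mono mult_left_mono)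
      fix i assume "i \<in> {..<k}"
      then have i: "i < k" by simp
      have "card (p i \<inter> F) \<le> card (E2 E k p \<inter> p i)"
        using finp[OF i] unfolding F_def by (intro card_mono) auto
      also have "\<dots> \<le> b" unfolding b_def bmax_def using i by (intro Max_ge) auto
      finally show "real (card (p i \<inter> F)) \<le> real b" by simp
      show "0 \<le> lam i - x i" using xb i by simp
    qed
    finally have "(\<Sum>i<k. lam i - l2 i) \<le> (\<Sum>i<k. lam i - x i) + real b * (\<Sum>i<k. lam i - x i)"
      by (simp add: sum_distrib_left mult.commute)
    then show ?thesis by (simp add: algebra_simps)
  qed
  have ne: "S \<noteq> {}"
  proof -
    have "(\<Sum>i<k. (0::real)) \<in> S" unfolding S_def using lamnn Ctnn unfolding Ct_def
      by (auto intro!: exI[of _ "\<lambda>_. 0"])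
    then show ?thesis by auto
  qed
  have bpos: "0 < real (b+1)" by simp
  have "Sup S \<le> (\<Sum>i<k. lam i) - (\<Sum>i<k. lam i - l2 i) / real (b+1)"
  proof (rule cSup_least[OF ne])
    fix s assume "s \<in> S"
    then obtain x where s: "s = (\<Sum>i<k. x i)"
      and xc: "\<forall>e\<in>E. (\<Sum>i | i < k \<and> e \<in> p i. x i) \<le> Ctil C \<gamma> A e"
      and xb: "\<forall>i<k. 0 \<le> x i \<and> x i \<le> lam i" unfolding S_def by blast
    have "(\<Sum>i<k. lam i - l2 i) / real (b+1) \<le> (\<Sum>i<k. lam i - x i)"
      using key[OF xc xb] bpos by (simp add: divide_le_eq mult.commute)
    then show "s \<le> (\<Sum>i<k. lam i) - (\<Sum>i<k. lam i - l2 i) / real (b+1)"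
      unfolding s by (simp add: sum_subtractf)
  qed
  then have part2: "(\<Sum>i<k. lam i - l2 i) \<le> real (b+1) * ((\<Sum>i<k. lam i) - Sup S)"
    using bpos by (simp add: field_simps)
  show ?thesis
    unfolding Lam_def Lambar_def TS[symmetric] using part1 part2 TS
    by (simp add: l2_def b_def sum_subtractf)
qed

end
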